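(* Let $\mathcal X$ be an input space and $\mathcal Y$ an output space, let $r:\mathcal X\times\mathcal Y\to\mathbb R$ be a reward function, let $\pi_0(y\mid x)$ be the current conditional policy, assumed absolutely continuous, let $A(x,y)$ denote the advantage function (of the form $r(x,y)+\lambda(x)$ for a baseline $\lambda:\mathcal X\to\mathbb R$), and fix $\gamma\ge 0$ and $\eta>0$. Let $\delta\mathcal F(\pi_0;\delta\pi)=\int_{\mathcal Y}r(x,y)\,\delta\pi(y\mid x)\,dy$ be the first variation of the expected return functional $\mathcal F(\pi)=\mathbb E_{y\sim\pi(y\mid x)}[r(x,y)]$. Consider, over all admissible variations $\delta\pi(y\mid x)$ (signed measures with $\int\delta\pi(y\mid x)\,dy=0$ for every $x$), the local update problem with the $\gamma$-weighted variational metric \[ \max_{\delta\pi}\Big\{\delta\mathcal F(\pi_0;\delta\pi)-\frac{1}{2\eta}\int_{\mathcal Y}\frac{(\delta\pi(y\mid x))^2}{|A(x,y)|^{\gamma}\,\pi_0(y\mid x)}\,dy\Big\}. \] Then the optimal ascent satisfies \[ \delta\pi(y\mid x)\propto\pi_0(y\mid x)\,\mathrm{sign}(A(x,y))\,|A(x,y)|^{1+\gamma}. \]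
   Context: The $\gamma$-weighted variational metric on admissible variations at $\pi_0$ is $\langle\delta\pi_1,\delta\pi_2\rangle^{\gamma}_{\pi_0}=\int_{\mathcal Y}\frac{\delta\pi_1(y\mid x)\,\delta\pi_2(y\mid x)}{|A(x,y)|^{\gamma}\pi_0(y\mid x)}\,dy$, a weighted version of the Fisher–Rao metric; advantage functions differing by a function of $x$ alone are regarded as equivalent (they give the same policy gradient). *)

theory Defs
  imports "HOL-Analysis.Analysis"
begin

text \<open>|a|^g with the convention |a|^0 = 1 (also at a = 0).\<close>
definition gpow :: "real \<Rightarrow> real \<Rightarrow> real" where
  "gpow a g = (if g = 0 then 1 else \<bar>a\<bar> powr g)"

definition metric_weight ::
  "('x \<Rightarrow> 'y \<Rightarrow> real) \<Rightarrow> ('x \<Rightarrow> 'y \<Rightarrow> real) \<Rightarrow> real \<Rightarrow> 'x \<Rightarrow> 'y \<Rightarrow> real" where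
  "metric_weight A \<pi>0 \<gamma> x y = gpow (A x y) \<gamma> * \<pi>0 x y"

text \<open>Where the weight
  vanishes the penalty d^2/w is infinite unless d vanishes, so d must vanish a.e. there.\<close>
definition admissible ::
  "'y measure \<Rightarrow> ('x \<Rightarrow> 'y \<Rightarrow> real) \<Rightarrow> ('x \<Rightarrow> 'y \<Rightarrow> real) \<Rightarrow> ('x \<Rightarrow> 'y \<Rightarrow> real)
     \<Rightarrow> real \<Rightarrow> 'x \<Rightarrow> ('y \<Rightarrow> real) \<Rightarrow> bool" where
  "admissible M r A \<pi>0 \<gamma> x d \<longleftrightarrow>
     d \<in> borel_measurable M \<and> integrable M d \<and> (\<integral>y. d y \<partial>M) = 0 \<and>
     integrable M (\<lambda>y. r x y * d y) \<and>
     integrable M (\<lambda>y. (d y)\<^sup>2 / metric_weight A \<pi>0 \<gamma> x y) \<and>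
     (AE y in M. metric_weight A \<pi>0 \<gamma> x y = 0 \<longrightarrow> d y = 0)"

definition local_objective ::
  "'y measure \<Rightarrow> ('x \<Rightarrow> 'y \<Rightarrow> real) \<Rightarrow> ('x \<Rightarrow> 'y \<Rightarrow> real) \<Rightarrow> ('x \<Rightarrow> 'y \<Rightarrow> real)
     \<Rightarrow> real \<Rightarrow> real \<Rightarrow> 'x \<Rightarrow> ('y \<Rightarrow> real) \<Rightarrow> real" where
  "local_objective M r A \<pi>0 \<gamma> \<eta> x d =
     (\<integral>y. r x y * d y \<partial>M)
     - 1 / (2 * \<eta>) * (\<integral>y. (d y)\<^sup>2 / metric_weight A \<pi>0 \<gamma> x y \<partial>M)"

end

theory Submission
  imports Defs
begin

lemma gpow_nonneg: "gpow a g \<ge> 0"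
  by (simp add: gpow_def)

lemma gpow_sgn: "sgn a * \<bar>a\<bar> powr (1 + g) = gpow a g * a" if "g \<ge> 0" for a g :: real
proof (cases "a = 0")
  case True then show ?thesis by (simp add: gpow_def)
next
  case False
  then have "\<bar>a\<bar> powr (1 + g) = \<bar>a\<bar> * \<bar>a\<bar> powr g" by (simp add: powr_add)
  moreover have "sgn a * \<bar>a\<bar> = a" by (simp add: sgn_mult_abs)
  ultimately show ?thesis using False by (auto simp: gpow_def)
qed

lemma gpow_sq: "gpow a g * a\<^sup>2 = \<bar>a\<bar> powr (2 + g)" if "g \<ge> 0" for a g :: real
proof (cases "a = 0")
  case True then show ?thesis by (simp add: gpow_def)
next
  case False
  then have "\<bar>a\<bar> powr (2 + g) = \<bar>a\<bar> powr 2 * \<bar>a\<bar> powr g" by (simp add: powr_add)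
  moreover have "\<bar>a\<bar> powr 2 = a\<^sup>2" using False by (simp add: powr_numeral)
  ultimately show ?thesis using False by (auto simp: gpow_def)
qed

lemma gpow_meas[measurable]:
  fixes f :: "'a \<Rightarrow> real"
  assumes [measurable]: "f \<in> borel_measurable M"
  shows "(\<lambda>y. gpow (f y) g) \<in> borel_measurable M"
  unfolding gpow_def by measurable

theorem theorem3:
  fixes M :: "'y measure"
    and r :: "'x \<Rightarrow> 'y \<Rightarrow> real"
    and \<pi>0 :: "'x \<Rightarrow> 'y \<Rightarrow> real"
    and b :: "'x \<Rightarrow> real"
    and A :: "'x \<Rightarrow> 'y \<Rightarrow> real"
    and \<gamma> \<eta> :: real
  assumes gamma: "\<gamma> \<ge> 0" and eta: "\<eta> > 0"
    and r_meas: "\<And>x. r x \<in> borel_measurable M"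
    and pi_meas: "\<And>x. \<pi>0 x \<in> borel_measurable M"
    and pi_nonneg: "\<And>x y. \<pi>0 x y \<ge> 0"
    and pi_int: "\<And>x. integrable M (\<pi>0 x)"
    and pi_norm: "\<And>x. (\<integral>y. \<pi>0 x y \<partial>M) = 1"
    and A_def: "\<And>x y. A x y = r x y + b x"
    and A_centered: "\<And>x. (\<integral>y. \<pi>0 x y * gpow (A x y) \<gamma> * A x y \<partial>M) = 0"
    and int1: "\<And>x. integrable M (\<lambda>y. \<pi>0 x y * \<bar>A x y\<bar> powr (1 + \<gamma>))"
    and int2: "\<And>x. integrable M (\<lambda>y. \<pi>0 x y * \<bar>A x y\<bar> powr (2 + \<gamma>))"
  shows "\<forall>x. let D = (\<lambda>y. \<eta> * (\<pi>0 x y * sgn (A x y) * \<bar>A x y\<bar> powr (1 + \<gamma>))) in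
           admissible M r A \<pi>0 \<gamma> x D \<and>
           (\<forall>d. admissible M r A \<pi>0 \<gamma> x d \<longrightarrow>
                 local_objective M r A \<pi>0 \<gamma> \<eta> x d \<le> local_objective M r A \<pi>0 \<gamma> \<eta> x D) \<and>
           (\<forall>d. admissible M r A \<pi>0 \<gamma> x d \<and>
                 local_objective M r A \<pi>0 \<gamma> \<eta> x d = local_objective M r A \<pi>0 \<gamma> \<eta> x D
                 \<longrightarrow> (AE y in M. d y = D y))"
proof (intro allI)
  fix x
  define D where "D = (\<lambda>y. \<eta> * (\<pi>0 x y * sgn (A x y) * \<bar>A x y\<bar> powr (1 + \<gamma>)))"
  define w where "w = metric_weight A \<pi>0 \<gamma> x"
  define a where "a = A x"
  have rm[measurable]: "r x \<in> borel_measurable M" by (rule r_meas)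
  have pm[measurable]: "\<pi>0 x \<in> borel_measurable M" by (rule pi_meas)
  have a_eq: "a = (\<lambda>y. r x y + b x)" unfolding a_def using A_def by auto
  have am[measurable]: "a \<in> borel_measurable M" unfolding a_eq by measurable
  have w_eq: "w = (\<lambda>y. gpow (a y) \<gamma> * \<pi>0 x y)"
    unfolding w_def a_def metric_weight_def by auto
  have wm[measurable]: "w \<in> borel_measurable M" unfolding w_eq by measurable
  have w_nn: "\<And>y. w y \<ge> 0" unfolding w_eq using gpow_nonneg pi_nonneg by simp
  have D_eq: "D = (\<lambda>y. \<eta> * w y * a y)"
    unfolding D_def w_eq a_def
    using gpow_sgn[OF gamma] by (auto simp: fun_eq_iff mult_ac)
  have Dm[measurable]: "D \<in> borel_measurable M" unfolding D_eq by measurable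
  have wa2: "(\<lambda>y. w y * (a y)\<^sup>2) = (\<lambda>y. \<pi>0 x y * \<bar>A x y\<bar> powr (2 + \<gamma>))"
    unfolding w_eq a_def using gpow_sq[OF gamma] by (auto simp: fun_eq_iff mult_ac)
  have i_wa2: "integrable M (\<lambda>y. w y * (a y)\<^sup>2)" unfolding wa2 by (rule int2)
  have i_D: "integrable M D"
  proof (rule Bochner_Integration.integrable_bound[OF integrable_mult_right[OF int1[of x], of \<eta>]])
    show "D \<in> borel_measurable M" by measurable
    show "AE y in M. norm (D y) \<le> norm (\<eta> * (\<pi>0 x y * \<bar>A x y\<bar> powr (1 + \<gamma>)))"
      unfolding D_def using eta pi_nonneg[of x]
      by (auto simp: abs_mult sgn_if)
  qed
  have int_D: "(\<integral>y. D y \<partial>M) = 0"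
  proof -
    have "(\<integral>y. D y \<partial>M) = \<eta> * (\<integral>y. \<pi>0 x y * gpow (A x y) \<gamma> * A x y \<partial>M)"
      unfolding D_eq w_eq a_def by (simp add: mult_ac)
    then show ?thesis using A_centered by simp
  qed
  have aD: "(\<lambda>y. a y * D y) = (\<lambda>y. \<eta> * (w y * (a y)\<^sup>2))"
    unfolding D_eq by (auto simp: fun_eq_iff power2_eq_square mult_ac)
  have i_aD: "integrable M (\<lambda>y. a y * D y)" unfolding aD using i_wa2 by simp
  have i_rD: "integrable M (\<lambda>y. r x y * D y)"
  proof -
    have "(\<lambda>y. r x y * D y) = (\<lambda>y. a y * D y - b x * D y)"
      unfolding a_eq by (auto simp: algebra_simps)
    then show ?thesis using i_aD i_D by simp
  qed
  have DD: "(\<lambda>y. (D y)\<^sup>2 / w y) = (\<lambda>y. \<eta>\<^sup>2 * (w y * (a y)\<^sup>2))"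
    unfolding D_eq by (auto simp: fun_eq_iff power2_eq_square)
  have i_DD: "integrable M (\<lambda>y. (D y)\<^sup>2 / w y)" unfolding DD using i_wa2 by simp
  have admD: "admissible M r A \<pi>0 \<gamma> x D"
    unfolding admissible_def w_def[symmetric]
    using Dm i_D int_D i_rD i_DD by (auto simp: D_eq)
  define g where "g = (\<lambda>d y. a y * d y - (d y)\<^sup>2 / w y / (2 * \<eta>))"
  have obj: "local_objective M r A \<pi>0 \<gamma> \<eta> x d = (\<integral>y. g d y \<partial>M)
     \<and> integrable M (g d)" if ad: "admissible M r A \<pi>0 \<gamma> x d" for d
  proof -
    from ad have i_d: "integrable M d" and i0: "(\<integral>y. d y \<partial>M) = 0"
      and i_rd: "integrable M (\<lambda>y. r x y * d y)"
      and i_dd: "integrable M (\<lambda>y. (d y)\<^sup>2 / w y)"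
      unfolding admissible_def w_def by auto
    have ad_eq: "(\<lambda>y. a y * d y) = (\<lambda>y. r x y * d y + b x * d y)"
      unfolding a_eq by (auto simp: algebra_simps)
    have i_ad: "integrable M (\<lambda>y. a y * d y)" unfolding ad_eq using i_rd i_d by simp
    have "(\<integral>y. a y * d y \<partial>M) = (\<integral>y. r x y * d y \<partial>M) + b x * (\<integral>y. d y \<partial>M)"
      unfolding ad_eq using i_rd i_d by simp
    then have e1: "(\<integral>y. a y * d y \<partial>M) = (\<integral>y. r x y * d y \<partial>M)" using i0 by simp
    have ig: "integrable M (g d)" unfolding g_def
      by (intro Bochner_Integration.integrable_diff i_ad integrable_divide_zero i_dd)
    have "(\<integral>y. g d y \<partial>M) = (\<integral>y. a y * d y \<partial>M) - (\<integral>y. (d y)\<^sup>2 / w y \<partial>M) / (2 * \<eta>)"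
      unfolding g_def
      by (subst Bochner_Integration.integral_diff[OF i_ad integrable_divide_zero[OF i_dd]])
         (rule arg_cong[where f="\<lambda>t. _ - t"], rule integral_divide_zero)
    then show ?thesis using e1 ig unfolding local_objective_def w_def by simp
  qed
  have gD: "g D y = \<eta> * (w y * (a y)\<^sup>2) / 2" for y
  proof -
    have "a y * D y = \<eta> * (w y * (a y)\<^sup>2)" using aD by (metis)
    moreover have "(D y)\<^sup>2 / w y = \<eta>\<^sup>2 * (w y * (a y)\<^sup>2)" using DD by metis
    ultimately show ?thesis unfolding g_def using eta by (simp add: power2_eq_square field_simps)
  qed
  have gdiff: "g D y - g d y = (d y - D y)\<^sup>2 / (2 * \<eta> * w y)" if "w y > 0" for d y
    unfolding gD unfolding g_def D_eq using that eta
    by (simp add: field_simps power2_eq_square)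
  have AEle: "AE y in M. g d y \<le> g D y \<and> (g d y = g D y \<longrightarrow> d y = D y)"
    if ad: "admissible M r A \<pi>0 \<gamma> x d" for d
  proof -
    from ad have "AE y in M. w y = 0 \<longrightarrow> d y = 0" unfolding admissible_def w_def by auto
    then show ?thesis
    proof (rule AE_mp, intro AE_I2 impI)
      fix y assume h: "w y = 0 \<longrightarrow> d y = 0"
      show "g d y \<le> g D y \<and> (g d y = g D y \<longrightarrow> d y = D y)"
      proof (cases "w y = 0")
        case True then show ?thesis using h by (simp add: g_def D_eq)
      next
        case False
        then have wp: "w y > 0" using w_nn[of y] by simp
        have "(d y - D y)\<^sup>2 / (2 * \<eta> * w y) \<ge> 0" using wp eta by simp
        moreover have "(d y - D y)\<^sup>2 / (2 * \<eta> * w y) = 0 \<Longrightarrow> d y = D y" using wp eta by simp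
        ultimately show ?thesis using gdiff[OF wp, of d] by auto
      qed
    qed
  qed
  have opt: "local_objective M r A \<pi>0 \<gamma> \<eta> x d \<le> local_objective M r A \<pi>0 \<gamma> \<eta> x D"
    if ad: "admissible M r A \<pi>0 \<gamma> x d" for d
  proof -
    have "(\<integral>y. g d y \<partial>M) \<le> (\<integral>y. g D y \<partial>M)"
      using obj[OF ad] obj[OF admD] AEle[OF ad]
      by (intro integral_mono_AE) (auto elim: AE_mp)
    then show ?thesis using obj[OF ad] obj[OF admD] by simp
  qed
  have uniq: "AE y in M. d y = D y"
    if ad: "admissible M r A \<pi>0 \<gamma> x d"
      and eq: "local_objective M r A \<pi>0 \<gamma> \<eta> x d = local_objective M r A \<pi>0 \<gamma> \<eta> x D" for d
  proof -
    have i: "integrable M (\<lambda>y. g D y - g d y)" using obj[OF ad] obj[OF admD] by simp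
    have "(\<integral>y. g D y - g d y \<partial>M) = 0" using obj[OF ad] obj[OF admD] eq by simp
    moreover have "AE y in M. 0 \<le> g D y - g d y" using AEle[OF ad] by (auto elim: AE_mp)
    ultimately have "AE y in M. g D y - g d y = 0" using integral_nonneg_eq_0_iff_AE[OF i] by simp
    then show ?thesis using AEle[OF ad] by eventually_elim auto
  qed
  show "let D = (\<lambda>y. \<eta> * (\<pi>0 x y * sgn (A x y) * \<bar>A x y\<bar> powr (1 + \<gamma>))) in
           admissible M r A \<pi>0 \<gamma> x D \<and>
           (\<forall>d. admissible M r A \<pi>0 \<gamma> x d \<longrightarrow>
                 local_objective M r A \<pi>0 \<gamma> \<eta> x d \<le> local_objective M r A \<pi>0 \<gamma> \<eta> x D) \<and>
           (\<forall>d. admissible M r A \<pi>0 \<gamma> x d \<and>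
                 local_objective M r A \<pi>0 \<gamma> \<eta> x d = local_objective M r A \<pi>0 \<gamma> \<eta> x D
                 \<longrightarrow> (AE y in M. d y = D y))"
    unfolding Let_def D_def[symmetric] using admD opt uniq by blast
qed

end
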